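(* For every $n\ge0$, the localization $(\underline n\downarrow\Delta)[\mathcal I^{-1}]$, obtained from the coslice category $(\underline n\downarrow\Delta)$ by formally inverting all morphisms whose underlying map is injective, is a thin category.
   Context: $\Delta$ denotes the category whose objects are the finite totally ordered sets $\underline k=\{1,\dots,k\}$ for $k\ge 0$ (including the empty set $\underline 0$) and whose morphisms are order-preserving maps. $\mathcal I\subseteq\Delta$ is the subcategory of injective order-preserving maps. Objects of $(\underline n\downarrow\Delta)$ are order-preserving maps $\underline n\to\underline k$ and morphisms are order-preserving maps $\underline k\to\underline k'$ making the triangle commute. A category is thin if any two parallel morphisms are equal. *)

theory Defs
  imports Main
begin

text \<open>The finite ordinal k is modelled as the set {1..k} of naturals.
  An object of the coslice category (n \<down> Delta) is a pair (k, f) with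
  f an order-preserving map {1..n} \<rightarrow> {1..k}; f is made extensional
  (value 0 outside {1..n}) so that equal maps are equal functions.\<close>

type_synonym cobj = "nat \<times> (nat \<Rightarrow> nat)"

definition ord_map :: "nat \<Rightarrow> nat \<Rightarrow> (nat \<Rightarrow> nat) \<Rightarrow> bool" where
  "ord_map m k f \<longleftrightarrow> (\<forall>i\<in>{1..m}. f i \<in> {1..k}) \<and> mono_on {1..m} f
      \<and> (\<forall>i. i \<notin> {1..m} \<longrightarrow> f i = 0)"

definition is_cobj :: "nat \<Rightarrow> cobj \<Rightarrow> bool" where
  "is_cobj n a \<longleftrightarrow> ord_map n (fst a) (snd a)"

type_synonym carr = "cobj \<times> cobj \<times> (nat \<Rightarrow> nat)"

definition is_carr :: "nat \<Rightarrow> cobj \<Rightarrow> cobj \<Rightarrow> (nat \<Rightarrow> nat) \<Rightarrow> bool" where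
  "is_carr n a b g \<longleftrightarrow> is_cobj n a \<and> is_cobj n b \<and> ord_map (fst a) (fst b) g
      \<and> (\<forall>i\<in>{1..n}. g (snd a i) = snd b i)"

definition cid :: "cobj \<Rightarrow> (nat \<Rightarrow> nat)" where
  "cid a = (\<lambda>x. if x \<in> {1..fst a} then x else 0)"

text \<open>Zigzags: a step is either a morphism (forward) or a formal inverse of a
  morphism whose underlying map is injective (backward).\<close>

datatype step = Fwd carr | Bwd carr

inductive zz :: "nat \<Rightarrow> cobj \<Rightarrow> step list \<Rightarrow> cobj \<Rightarrow> bool" for n where
  nil: "is_cobj n a \<Longrightarrow> zz n a [] a"
| fwd: "is_carr n a c g \<Longrightarrow> zz n c p b \<Longrightarrow> zz n a (Fwd (a, c, g) # p) b"
| bwd: "is_carr n c a g \<Longrightarrow> inj_on g {1..fst c} \<Longrightarrow> zz n c p b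
          \<Longrightarrow> zz n a (Bwd (c, a, g) # p) b"

text \<open>The congruence defining the localization: hom-set-wise equivalence of
  zigzags a \<rightarrow> b generated by identity, composition and inverse relations,
  closed under pre- and post-composition with zigzags.\<close>

inductive zeq :: "nat \<Rightarrow> cobj \<Rightarrow> step list \<Rightarrow> step list \<Rightarrow> cobj \<Rightarrow> bool" for n where
  refl: "zz n a p b \<Longrightarrow> zeq n a p p b"
| sym: "zeq n a p q b \<Longrightarrow> zeq n a q p b"
| trans: "zeq n a p q b \<Longrightarrow> zeq n a q r b \<Longrightarrow> zeq n a p r b"
| ctx: "zz n a1 u a \<Longrightarrow> zeq n a p q b \<Longrightarrow> zz n b v b1 \<Longrightarrow> zeq n a1 (u @ p @ v) (u @ q @ v) b1"
| ident: "is_cobj n a \<Longrightarrow> zeq n a [Fwd (a, a, cid a)] [] a"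
| comp: "is_carr n a b g \<Longrightarrow> is_carr n b c h \<Longrightarrow>
           zeq n a [Fwd (a, b, g), Fwd (b, c, h)] [Fwd (a, c, h \<circ> g)] c"
| inv_l: "is_carr n a b g \<Longrightarrow> inj_on g {1..fst a} \<Longrightarrow>
           zeq n a [Fwd (a, b, g), Bwd (a, b, g)] [] a"
| inv_r: "is_carr n a b g \<Longrightarrow> inj_on g {1..fst a} \<Longrightarrow>
           zeq n b [Bwd (a, b, g), Fwd (a, b, g)] [] b"

definition localization_thin :: "nat \<Rightarrow> bool" where
  "localization_thin n \<longleftrightarrow> (\<forall>a b p q. zz n a p b \<longrightarrow> zz n a q b \<longrightarrow> zeq n a p q b)"

end

theory Submission
  imports Defs
begin

definition SS :: "nat \<Rightarrow> cobj \<Rightarrow> nat set" where "SS n a = snd a ` {1..n}"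
definition rk :: "nat \<Rightarrow> cobj \<Rightarrow> nat \<Rightarrow> nat" where "rk n a x = card {y \<in> SS n a. y \<le> x}"
definition sa :: "nat \<Rightarrow> cobj \<Rightarrow> nat \<Rightarrow> nat" where
  "sa n a i = (if i \<in> {1..n} then rk n a (snd a i) else 0)"
definition ja :: "nat \<Rightarrow> cobj \<Rightarrow> nat" where "ja n a = card (SS n a)"
definition ra :: "nat \<Rightarrow> cobj \<Rightarrow> cobj" where "ra n a = (ja n a, sa n a)"
definition ia :: "nat \<Rightarrow> cobj \<Rightarrow> nat \<Rightarrow> nat" where
  "ia n a y = (if y \<in> {1..ja n a} then inv_into (SS n a) (rk n a) y else 0)"

lemma fin_SS[simp]: "finite (SS n a)" by (simp add: SS_def)

lemma rk_mono: "x \<le> x' \<Longrightarrow> rk n a x \<le> rk n a x'"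
  unfolding rk_def by (rule card_mono) auto

lemma rk_strict: "x' \<in> SS n a \<Longrightarrow> x < x' \<Longrightarrow> rk n a x < rk n a x'"
proof -
  assume a1: "x' \<in> SS n a" and a2: "x < x'"
  have "{y \<in> SS n a. y \<le> x} \<subset> {y \<in> SS n a. y \<le> x'}"
  proof
    show "{y \<in> SS n a. y \<le> x} \<subseteq> {y \<in> SS n a. y \<le> x'}" using a2 by auto
    show "{y \<in> SS n a. y \<le> x} \<noteq> {y \<in> SS n a. y \<le> x'}"
    proof
      assume "{y \<in> SS n a. y \<le> x} = {y \<in> SS n a. y \<le> x'}"
      moreover have "x' \<in> {y \<in> SS n a. y \<le> x'}" using a1 by simp
      ultimately have "x' \<in> {y \<in> SS n a. y \<le> x}" by simp
      then show False using a2 by simp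
    qed
  qed
  then show ?thesis unfolding rk_def by (intro psubset_card_mono) auto
qed

lemma rk_range: "x \<in> SS n a \<Longrightarrow> rk n a x \<in> {1..ja n a}"
proof -
  assume x: "x \<in> SS n a"
  have "card {y \<in> SS n a. y \<le> x} > 0" using x by (subst card_gt_0_iff) auto
  then have "rk n a x \<ge> 1" unfolding rk_def by simp
  moreover have "rk n a x \<le> ja n a" unfolding rk_def ja_def by (rule card_mono) auto
  ultimately show ?thesis by simp
qed

lemma rk_inj: "inj_on (rk n a) (SS n a)"
proof (rule inj_onI)
  fix x y assume "x \<in> SS n a" "y \<in> SS n a" "rk n a x = rk n a y"
  then show "x = y" using rk_strict[of y n a x] rk_strict[of x n a y]
    by (cases x y rule: linorder_cases) auto
qed

lemma rk_bij: "bij_betw (rk n a) (SS n a) {1..ja n a}"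
proof -
  have sub: "rk n a ` SS n a \<subseteq> {1..ja n a}" using rk_range by blast
  have "card (rk n a ` SS n a) = card {1..ja n a}"
    using card_image[OF rk_inj] by (simp add: ja_def)
  then have "rk n a ` SS n a = {1..ja n a}" using card_subset_eq[OF _ sub] by simp
  then show ?thesis using rk_inj by (simp add: bij_betw_def)
qed

lemma ia_in: "y \<in> {1..ja n a} \<Longrightarrow> ia n a y \<in> SS n a \<and> rk n a (ia n a y) = y"
proof -
  assume y: "y \<in> {1..ja n a}"
  have im: "rk n a ` SS n a = {1..ja n a}" using rk_bij[of n a] by (simp add: bij_betw_def)
  have e: "ia n a y = inv_into (SS n a) (rk n a) y" using y by (simp add: ia_def)
  have y': "y \<in> rk n a ` SS n a" using y im by simp
  show ?thesis unfolding e using inv_into_into[OF y'] f_inv_into_f[OF y'] by simp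
qed

lemma ia_rk: "x \<in> SS n a \<Longrightarrow> ia n a (rk n a x) = x"
  using rk_range[of x n a] rk_inj[of n a] unfolding ia_def by (simp add: inv_into_f_f)

lemma sa_range: "i \<in> {1..n} \<Longrightarrow> sa n a i \<in> {1..ja n a}"
  unfolding sa_def using rk_range[of "snd a i" n a] by (simp add: SS_def)

lemma sa_K: "i \<in> {1..n} \<Longrightarrow> i' \<in> {1..n} \<Longrightarrow> (sa n a i = sa n a i') = (snd a i = snd a i')"
proof -
  assume i: "i \<in> {1..n}" and i': "i' \<in> {1..n}"
  have m: "snd a i \<in> SS n a" "snd a i' \<in> SS n a" using i i' by (simp_all add: SS_def)
  have "sa n a i = rk n a (snd a i)" "sa n a i' = rk n a (snd a i')" using i i' by (simp_all add: sa_def)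
  then show ?thesis using inj_on_eq_iff[OF rk_inj m] by simp
qed

lemma sa_surj: "y \<in> {1..ja n a} \<Longrightarrow> \<exists>i\<in>{1..n}. sa n a i = y"
proof -
  assume y: "y \<in> {1..ja n a}"
  then have "ia n a y \<in> SS n a" "rk n a (ia n a y) = y" using ia_in by auto
  then obtain i where i: "i \<in> {1..n}" "snd a i = ia n a y" unfolding SS_def by auto
  then have "sa n a i = y" using \<open>rk n a (ia n a y) = y\<close> unfolding sa_def by simp
  then show ?thesis using i(1) by blast
qed

lemma ia_sa: "i \<in> {1..n} \<Longrightarrow> ia n a (sa n a i) = snd a i"
  unfolding sa_def using ia_rk[of "snd a i" n a] by (simp add: SS_def)

lemma SS_sub: "is_cobj n a \<Longrightarrow> SS n a \<subseteq> {1..fst a}"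
  unfolding is_cobj_def ord_map_def SS_def by auto

lemma cobj_ra: "is_cobj n a \<Longrightarrow> is_cobj n (ra n a)"
proof -
  assume a: "is_cobj n a"
  have "mono_on {1..n} (sa n a)"
  proof (rule mono_onI)
    fix i i' assume "i \<in> {1..n}" "i' \<in> {1..n}" "i \<le> i'"
    then have "snd a i \<le> snd a i'" using a unfolding is_cobj_def ord_map_def
      by (meson mono_onD)
    then show "sa n a i \<le> sa n a i'" using \<open>i \<in> {1..n}\<close> \<open>i' \<in> {1..n}\<close>
      unfolding sa_def by (simp add: rk_mono)
  qed
  then show ?thesis unfolding is_cobj_def ord_map_def ra_def
    using sa_range[of _ n a] by (auto simp: sa_def)
qed

lemma carr_ia: "is_cobj n a \<Longrightarrow> is_carr n (ra n a) a (ia n a)"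
proof -
  assume a: "is_cobj n a"
  have m: "mono_on {1..ja n a} (ia n a)"
  proof (rule mono_onI)
    fix y y' assume y: "y \<in> {1..ja n a}" "y' \<in> {1..ja n a}" "y \<le> y'"
    show "ia n a y \<le> ia n a y'"
    proof (rule ccontr)
      assume "\<not> ia n a y \<le> ia n a y'"
      then have "rk n a (ia n a y') < rk n a (ia n a y)"
        using rk_strict[of "ia n a y" n a "ia n a y'"] ia_in[OF y(1)] by simp
      then show False using ia_in[OF y(1)] ia_in[OF y(2)] y(3) by simp
    qed
  qed
  have r: "\<forall>y\<in>{1..ja n a}. ia n a y \<in> {1..fst a}"
    using ia_in SS_sub[OF a] by blast
  have "ord_map (ja n a) (fst a) (ia n a)" unfolding ord_map_def using m r
    by (auto simp: ia_def)
  then show ?thesis unfolding is_carr_def using a cobj_ra[OF a] ia_sa[of _ n a]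
    by (simp add: ra_def)
qed

lemma inj_ia: "inj_on (ia n a) {1..fst (ra n a)}"
  unfolding ra_def by (rule inj_onI) (metis fst_conv ia_in)

definition hh :: "nat \<Rightarrow> cobj \<Rightarrow> cobj \<Rightarrow> nat \<Rightarrow> nat" where
  "hh n r s y = (if y \<in> {1..fst r} then snd s (SOME i. i \<in> {1..n} \<and> snd r i = y) else 0)"

definition cmpt :: "nat \<Rightarrow> cobj \<Rightarrow> cobj \<Rightarrow> bool" where
  "cmpt n a b \<longleftrightarrow> (\<forall>i\<in>{1..n}. \<forall>i'\<in>{1..n}. snd a i = snd a i' \<longrightarrow> snd b i = snd b i')"

lemma sa_eq: "i \<in> {1..n} \<Longrightarrow> sa n a i = rk n a (snd a i)"
  unfolding sa_def by simp

lemma cmptD: "cmpt n a b \<Longrightarrow> i \<in> {1..n} \<Longrightarrow> i' \<in> {1..n} \<Longrightarrow> snd a i = snd a i' \<Longrightarrow> snd b i = snd b i'"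
  unfolding cmpt_def by blast

lemma ord_mapD: "ord_map m k f \<Longrightarrow> i \<in> {1..m} \<Longrightarrow> i' \<in> {1..m} \<Longrightarrow> i \<le> i' \<Longrightarrow> f i \<le> f i'"
  unfolding ord_map_def by (meson mono_onD)

lemma carr_hh: "is_cobj n a \<Longrightarrow> is_cobj n b \<Longrightarrow> cmpt n a b \<Longrightarrow>
   is_carr n (ra n a) (ra n b) (hh n (ra n a) (ra n b))"
proof -
  assume a: "is_cobj n a" and b: "is_cobj n b" and c: "cmpt n a b"
  define ch where "ch y = (SOME i. i \<in> {1..n} \<and> sa n a i = y)" for y
  have chp: "ch y \<in> {1..n} \<and> sa n a (ch y) = y" if "y \<in> {1..ja n a}" for y
    unfolding ch_def using sa_surj[OF that] by (rule someI2_bex) auto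
  have hdef: "hh n (ra n a) (ra n b) y = (if y \<in> {1..ja n a} then sa n b (ch y) else 0)" for y
    unfolding hh_def ra_def ch_def by simp
  have oa: "ord_map n (ja n a) (sa n a)" and ob: "ord_map n (ja n b) (sa n b)"
    using cobj_ra[OF a] cobj_ra[OF b] unfolding is_cobj_def ra_def by auto
  have "ord_map (ja n a) (ja n b) (hh n (ra n a) (ra n b))"
    unfolding ord_map_def
  proof (intro conjI ballI allI impI)
    fix y assume y: "y \<in> {1..ja n a}"
    have "hh n (ra n a) (ra n b) y = sa n b (ch y)" using hdef[of y] y by (simp only: if_P)
    then show "hh n (ra n a) (ra n b) y \<in> {1..ja n b}"
      using sa_range[OF conjunct1[OF chp[OF y]]] by (simp only:)
  next
    fix y assume "y \<notin> {1..ja n a}" then show "hh n (ra n a) (ra n b) y = 0" by (simp only: hdef \<open>y \<notin> {1..ja n a}\<close> if_False)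
  next
    show "mono_on {1..ja n a} (hh n (ra n a) (ra n b))"
    proof (rule mono_onI)
      fix y y' assume y: "y \<in> {1..ja n a}" "y' \<in> {1..ja n a}" "y \<le> y'"
      show "hh n (ra n a) (ra n b) y \<le> hh n (ra n a) (ra n b) y'"
      proof (cases "ch y \<le> ch y'")
        case True
        have h1: "hh n (ra n a) (ra n b) y = sa n b (ch y)" using hdef[of y] y(1) by (simp only: if_P)
        have h2: "hh n (ra n a) (ra n b) y' = sa n b (ch y')" using hdef[of y'] y(2) by (simp only: if_P)
        show ?thesis unfolding h1 h2
          by (rule ord_mapD[OF ob conjunct1[OF chp[OF y(1)]] conjunct1[OF chp[OF y(2)]] True])
      next
        case False
        then have "ch y' \<le> ch y" by simp
        then have "sa n a (ch y') \<le> sa n a (ch y)"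
          by (rule ord_mapD[OF oa conjunct1[OF chp[OF y(2)]] conjunct1[OF chp[OF y(1)]]])
        then have "y' \<le> y" using chp[OF y(1)] chp[OF y(2)] by simp
        then have "y = y'" using y(3) by simp
        then show ?thesis by simp
      qed
    qed
  qed
  moreover have "\<forall>i\<in>{1..n}. hh n (ra n a) (ra n b) (snd (ra n a) i) = snd (ra n b) i"
  proof
    fix i assume i: "i \<in> {1..n}"
    have y: "sa n a i \<in> {1..ja n a}" using sa_range[OF i] .
    have "snd a (ch (sa n a i)) = snd a i"
      using sa_K[OF conjunct1[OF chp[OF y]] i] conjunct2[OF chp[OF y]] by simp
    then have "snd b (ch (sa n a i)) = snd b i"
      by (rule cmptD[OF c conjunct1[OF chp[OF y]] i])
    then have e: "rk n b (snd b (ch (sa n a i))) = rk n b (snd b i)" by (rule arg_cong)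
    have "hh n (ra n a) (ra n b) (snd (ra n a) i) = hh n (ra n a) (ra n b) (sa n a i)"
      by (simp add: ra_def)
    also have "\<dots> = sa n b (ch (sa n a i))" using hdef[of "sa n a i"] y by (simp only: if_P)
    also have "\<dots> = rk n b (snd b (ch (sa n a i)))" by (rule sa_eq[OF conjunct1[OF chp[OF y]]])
    also have "\<dots> = sa n b i" using e sa_eq[OF i] by simp
    also have "\<dots> = snd (ra n b) i" by (simp add: ra_def)
    finally show "hh n (ra n a) (ra n b) (snd (ra n a) i) = snd (ra n b) i" .
  qed
  ultimately show ?thesis unfolding is_carr_def using cobj_ra[OF a] cobj_ra[OF b]
    by (simp add: ra_def)
qed

lemma carr_comp: "is_carr n a b g \<Longrightarrow> is_carr n b c h \<Longrightarrow> is_carr n a c (h \<circ> g)"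
  unfolding is_carr_def ord_map_def
  by (auto simp: mono_on_def)

lemma carr_cid: "is_cobj n a \<Longrightarrow> is_carr n a a (cid a)"
  unfolding is_carr_def ord_map_def cid_def is_cobj_def
  by (auto simp: mono_on_def)

lemma carr_uniq: "is_cobj n a \<Longrightarrow> is_carr n (ra n a) b g1 \<Longrightarrow> is_carr n (ra n a) b g2 \<Longrightarrow> g1 = g2"
proof (rule ext)
  fix y assume a: "is_cobj n a" and g1: "is_carr n (ra n a) b g1" and g2: "is_carr n (ra n a) b g2"
  show "g1 y = g2 y"
  proof (cases "y \<in> {1..ja n a}")
    case True
    then obtain i where i: "i \<in> {1..n}" "sa n a i = y" using sa_surj by blast
    then show ?thesis using g1 g2 unfolding is_carr_def ra_def by auto
  next
    case False then show ?thesis using g1 g2 unfolding is_carr_def ra_def ord_map_def by auto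
  qed
qed

lemma ra_inv: "is_carr n c a g \<Longrightarrow> inj_on g {1..fst c} \<Longrightarrow> ra n c = ra n a"
proof -
  assume g: "is_carr n c a g" and inj: "inj_on g {1..fst c}"
  have c: "is_cobj n c" using g unfolding is_carr_def by simp
  have og: "ord_map (fst c) (fst a) g" using g unfolding is_carr_def by simp
  have key: "g x \<le> g y \<longleftrightarrow> x \<le> y" if "x \<in> {1..fst c}" "y \<in> {1..fst c}" for x y
  proof
    assume "x \<le> y" then show "g x \<le> g y" using ord_mapD[OF og] that by blast
  next
    assume gx: "g x \<le> g y"
    show "x \<le> y"
    proof (rule ccontr)
      assume "\<not> x \<le> y"
      then have "g y \<le> g x" using ord_mapD[OF og] that by simp
      then have "g x = g y" using gx by simp
      then have "x = y" using inj that by (meson inj_onD)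
      then show False using \<open>\<not> x \<le> y\<close> by simp
    qed
  qed
  have sub: "SS n c \<subseteq> {1..fst c}" using SS_sub[OF c] .
  have SSa: "SS n a = g ` SS n c"
    using g unfolding SS_def is_carr_def by (auto simp: image_image intro!: image_cong)
  have inj2: "inj_on g (SS n c)" using inj sub by (rule inj_on_subset)
  have jeq: "ja n a = ja n c" unfolding ja_def SSa using card_image[OF inj2] by simp
  have seq: "sa n a i = sa n c i" for i
  proof (cases "i \<in> {1..n}")
    case True
    have x: "snd c i \<in> SS n c" using True by (simp add: SS_def)
    have ai: "snd a i = g (snd c i)" using g True unfolding is_carr_def by simp
    have "{y \<in> SS n a. y \<le> snd a i} = g ` {y \<in> SS n c. y \<le> snd c i}"
    proof (rule set_eqI)
      fix z
      show "z \<in> {y \<in> SS n a. y \<le> snd a i} \<longleftrightarrow> z \<in> g ` {y \<in> SS n c. y \<le> snd c i}"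
      proof
        assume "z \<in> {y \<in> SS n a. y \<le> snd a i}"
        then obtain w where w: "w \<in> SS n c" "z = g w" "g w \<le> g (snd c i)" unfolding SSa ai by auto
        then have "w \<le> snd c i" using key[of w "snd c i"] sub x by blast
        then show "z \<in> g ` {y \<in> SS n c. y \<le> snd c i}" using w by blast
      next
        assume "z \<in> g ` {y \<in> SS n c. y \<le> snd c i}"
        then obtain w where w: "w \<in> SS n c" "z = g w" "w \<le> snd c i" by auto
        then have "g w \<le> g (snd c i)" using key[of w "snd c i"] sub x by blast
        then show "z \<in> {y \<in> SS n a. y \<le> snd a i}" using w unfolding SSa ai by blast
      qed
    qed
    moreover have "inj_on g {y \<in> SS n c. y \<le> snd c i}" using inj2 by (rule inj_on_subset) auto
    ultimately have "rk n a (snd a i) = rk n c (snd c i)" unfolding rk_def by (simp add: card_image)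
    then show ?thesis using True unfolding sa_def by simp
  next
    case False then show ?thesis by (simp only: sa_def \<open>i \<notin> {1..n}\<close> if_False)
  qed
  show ?thesis unfolding ra_def using jeq seq by auto
qed

lemma cmpt_refl: "cmpt n a a" unfolding cmpt_def by simp

lemma cmpt_fwd: "is_carr n a c g \<Longrightarrow> cmpt n c b \<Longrightarrow> cmpt n a b"
proof -
  assume g: "is_carr n a c g" and cb: "cmpt n c b"
  show ?thesis unfolding cmpt_def
  proof (intro ballI impI)
    fix i i' assume i: "i \<in> {1..n}" "i' \<in> {1..n}" "snd a i = snd a i'"
    have "snd c i = snd c i'" using g i unfolding is_carr_def by (metis (no_types))
    then show "snd b i = snd b i'" using cb i(1,2) unfolding cmpt_def by blast
  qed
qed

lemma cmpt_bwd: "is_carr n c a g \<Longrightarrow> inj_on g {1..fst c} \<Longrightarrow> cmpt n c b \<Longrightarrow> cmpt n a b"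
proof -
  assume g: "is_carr n c a g" and inj: "inj_on g {1..fst c}" and cb: "cmpt n c b"
  show ?thesis unfolding cmpt_def
  proof (intro ballI impI)
    fix i i' assume i: "i \<in> {1..n}" "i' \<in> {1..n}" "snd a i = snd a i'"
    have e: "g (snd c i) = g (snd c i')" using g i unfolding is_carr_def by (metis (no_types))
    have "snd c i \<in> {1..fst c}" "snd c i' \<in> {1..fst c}"
      using g i(1,2) unfolding is_carr_def is_cobj_def ord_map_def by auto
    then have "snd c i = snd c i'" using inj e by (rule inj_onD[rotated 2])
    then show "snd b i = snd b i'" using cb i(1,2) unfolding cmpt_def by blast
  qed
qed

lemma zz_Nil[simp]: "zz n a [] b \<longleftrightarrow> is_cobj n a \<and> b = a"
  by (rule iffI, erule zz.cases, auto intro: zz.intros)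

lemma zz_Fwd[simp]: "zz n a (Fwd (x, c, g) # p) b \<longleftrightarrow> x = a \<and> is_carr n a c g \<and> zz n c p b"
  by (rule iffI, erule zz.cases, auto intro: zz.intros)

lemma zz_Bwd[simp]: "zz n a (Bwd (c, x, g) # p) b \<longleftrightarrow> x = a \<and> is_carr n c a g \<and> inj_on g {1..fst c} \<and> zz n c p b"
  by (rule iffI, erule zz.cases, auto intro: zz.intros)

lemma zz_end: "zz n a p b \<Longrightarrow> is_cobj n b"
  by (induction rule: zz.induct) auto

lemma ctx': "zeq n x p q y \<Longrightarrow> zz n a u x \<Longrightarrow> zz n y v b \<Longrightarrow> P = u @ p @ v \<Longrightarrow> Q = u @ q @ v
  \<Longrightarrow> zeq n a P Q b"
  using zeq.ctx by blast

lemma carr_uniq': "r = ra n a \<Longrightarrow> is_cobj n a \<Longrightarrow> is_carr n r b g1 \<Longrightarrow> is_carr n r b g2 \<Longrightarrow> g1 = g2"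
  using carr_uniq by blast

definition NF :: "nat \<Rightarrow> cobj \<Rightarrow> cobj \<Rightarrow> step list" where
  "NF n a b = [Bwd (ra n a, a, ia n a), Fwd (ra n a, ra n b, hh n (ra n a) (ra n b)), Fwd (ra n b, b, ia n b)]"

lemma main: "zz n a p b \<Longrightarrow> zeq n a p (NF n a b) b \<and> cmpt n a b"
proof (induction rule: zz.induct)
  case (nil a)
  define r where "r = ra n a"
  define i where "i = ia n a"
  have cr: "is_cobj n r" using cobj_ra[OF nil] r_def by simp
  have ci: "is_carr n r a i" using carr_ia[OF nil] r_def i_def by simp
  have ji: "inj_on i {1..fst r}" using inj_ia r_def i_def by simp
  have hid: "hh n r r = cid r"
    unfolding r_def by (rule carr_uniq[OF nil carr_hh[OF nil nil cmpt_refl] carr_cid[OF cobj_ra[OF nil]]])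
  have z1: "zeq n r [Fwd (r, r, cid r)] [] r" using zeq.ident[OF cr] .
  have z2: "zeq n a (NF n a a) [Bwd (r, a, i), Fwd (r, a, i)] a"
    by (rule ctx'[OF z1, where u="[Bwd (r, a, i)]" and v="[Fwd (r, a, i)]"])
      (simp_all add: NF_def r_def[symmetric] i_def[symmetric] hid ci ji ji[simplified] carr_cid cr nil)
  have z3: "zeq n a [Bwd (r, a, i), Fwd (r, a, i)] [] a" using zeq.inv_r[OF ci ji] .
  have z4: "zeq n a (NF n a a) [] a" using zeq.trans[OF z2 z3] .
  show ?case using zeq.sym[OF z4] cmpt_refl by blast
next
  case (fwd a c g p b)
  have ca: "is_cobj n a" and cc: "is_cobj n c" using fwd.hyps(1) unfolding is_carr_def by auto
  have cb: "is_cobj n b" using zz_end[OF fwd.hyps(2)] .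
  have cac: "cmpt n a c" using cmpt_fwd[OF fwd.hyps(1) cmpt_refl] .
  have cab: "cmpt n a b" using cmpt_fwd[OF fwd.hyps(1)] fwd.IH by blast
  have ccb: "cmpt n c b" using fwd.IH by blast
  define ra' where "ra' = ra n a"
  define rc where "rc = ra n c"
  define rb where "rb = ra n b"
  define ia' where "ia' = ia n a"
  define ic where "ic = ia n c"
  define ib where "ib = ia n b"
  define hac where "hac = hh n ra' rc"
  define hcb where "hcb = hh n rc rb"
  define hab where "hab = hh n ra' rb"
  have Ia: "is_carr n ra' a ia'" using carr_ia[OF ca] ra'_def ia'_def by simp
  have Ic: "is_carr n rc c ic" using carr_ia[OF cc] rc_def ic_def by simp
  have Ib: "is_carr n rb b ib" using carr_ia[OF cb] rb_def ib_def by simp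
  have Ca: "is_cobj n ra'" using cobj_ra[OF ca] ra'_def by simp
  have Cc: "is_cobj n rc" using cobj_ra[OF cc] rc_def by simp
  have Cb: "is_cobj n rb" using cobj_ra[OF cb] rb_def by simp
  have Ja: "inj_on ia' {1..fst ra'}" using inj_ia ra'_def ia'_def by simp
  have Jc: "inj_on ic {1..fst rc}" using inj_ia rc_def ic_def by simp
  have Hac: "is_carr n ra' rc hac" using carr_hh[OF ca cc cac] ra'_def rc_def hac_def by simp
  have Hcb: "is_carr n rc rb hcb" using carr_hh[OF cc cb ccb] rc_def rb_def hcb_def by simp
  have Hab: "is_carr n ra' rb hab" using carr_hh[OF ca cb cab] ra'_def rb_def hab_def by simp
  have nat: "g \<circ> ia' = ic \<circ> hac"
    by (rule carr_uniq'[OF ra'_def ca carr_comp[OF Ia fwd.hyps(1)] carr_comp[OF Hac Ic]])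
  have hc: "hab = hcb \<circ> hac"
    by (rule carr_uniq'[OF ra'_def ca Hab carr_comp[OF Hac Hcb]])
  have NFc: "NF n c b = [Bwd (rc, c, ic), Fwd (rc, rb, hcb), Fwd (rb, b, ib)]"
    unfolding NF_def rc_def rb_def ic_def ib_def hcb_def by simp
  have NFa: "NF n a b = [Bwd (ra', a, ia'), Fwd (ra', rb, hab), Fwd (rb, b, ib)]"
    unfolding NF_def ra'_def rb_def ia'_def ib_def hab_def by simp
  have s1: "zeq n a (Fwd (a, c, g) # p) (Fwd (a, c, g) # NF n c b) b"
    by (rule ctx'[OF conjunct1[OF fwd.IH], where u="[Fwd (a, c, g)]" and v="[]"])
      (simp_all add: fwd.hyps cb cc Ja[simplified] Jc[simplified] ca cb cc Ca Cc Cb)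
  have s2: "zeq n a (Fwd (a, c, g) # NF n c b) [Bwd (ra', a, ia'), Fwd (ra', a, ia'), Fwd (a, c, g),
      Bwd (rc, c, ic), Fwd (rc, rb, hcb), Fwd (rb, b, ib)] b"
    by (rule zeq.sym, rule ctx'[OF zeq.inv_r[OF Ia Ja], where u="[]" and v="Fwd (a, c, g) # NF n c b"])
      (simp_all add: NFc fwd.hyps Ia Ja Ic Jc Ja[simplified] Jc[simplified] Hcb Ib ca cb Ja[simplified] Jc[simplified] ca cb cc Ca Cc Cb)
  have e3: "zeq n ra' [Fwd (ra', a, ia'), Fwd (a, c, g)] [Fwd (ra', rc, hac), Fwd (rc, c, ic)] c"
    using zeq.trans[OF zeq.comp[OF Ia fwd.hyps(1), unfolded nat] zeq.sym[OF zeq.comp[OF Hac Ic]]] .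
  have s3: "zeq n a [Bwd (ra', a, ia'), Fwd (ra', a, ia'), Fwd (a, c, g),
      Bwd (rc, c, ic), Fwd (rc, rb, hcb), Fwd (rb, b, ib)]
      [Bwd (ra', a, ia'), Fwd (ra', rc, hac), Fwd (rc, c, ic),
      Bwd (rc, c, ic), Fwd (rc, rb, hcb), Fwd (rb, b, ib)] b"
    by (rule ctx'[OF e3, where u="[Bwd (ra', a, ia')]" and v="[Bwd (rc, c, ic), Fwd (rc, rb, hcb), Fwd (rb, b, ib)]"])
      (simp_all add: Ia Ja Ic Jc Hcb Ib Ja[simplified] Jc[simplified] ca cb cc Ca Cc Cb)
  have s4: "zeq n a [Bwd (ra', a, ia'), Fwd (ra', rc, hac), Fwd (rc, c, ic),
      Bwd (rc, c, ic), Fwd (rc, rb, hcb), Fwd (rb, b, ib)]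
      [Bwd (ra', a, ia'), Fwd (ra', rc, hac), Fwd (rc, rb, hcb), Fwd (rb, b, ib)] b"
    by (rule ctx'[OF zeq.inv_l[OF Ic Jc], where u="[Bwd (ra', a, ia'), Fwd (ra', rc, hac)]" and v="[Fwd (rc, rb, hcb), Fwd (rb, b, ib)]"])
      (simp_all add: Ia Ja Hac Hcb Ib Ja[simplified] Jc[simplified] ca cb cc Ca Cc Cb)
  have s5: "zeq n a [Bwd (ra', a, ia'), Fwd (ra', rc, hac), Fwd (rc, rb, hcb), Fwd (rb, b, ib)]
      (NF n a b) b"
    unfolding NFa hc
    by (rule ctx'[OF zeq.comp[OF Hac Hcb], where u="[Bwd (ra', a, ia')]" and v="[Fwd (rb, b, ib)]"])
      (simp_all add: Ia Ja Ib Ja[simplified] Jc[simplified] ca cb cc Ca Cc Cb)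
  have "zeq n a (Fwd (a, c, g) # p) (NF n a b) b"
    using zeq.trans[OF s1 zeq.trans[OF s2 zeq.trans[OF s3 zeq.trans[OF s4 s5]]]] .
  then show ?case using cab by blast
next
  case (bwd c a g p b)
  have ca: "is_cobj n a" and cc: "is_cobj n c" using bwd.hyps(1) unfolding is_carr_def by auto
  have cb: "is_cobj n b" using zz_end[OF bwd.hyps(3)] .
  have ccb: "cmpt n c b" using bwd.IH by blast
  have cab: "cmpt n a b" using cmpt_bwd[OF bwd.hyps(1,2) ccb] .
  have req: "ra n c = ra n a" using ra_inv[OF bwd.hyps(1,2)] .
  define r where "r = ra n a"
  define rb where "rb = ra n b"
  define ia' where "ia' = ia n a"
  define ic where "ic = ia n c"
  define ib where "ib = ia n b"
  define h where "h = hh n r rb"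
  have Ia: "is_carr n r a ia'" using carr_ia[OF ca] r_def ia'_def by simp
  have Ic: "is_carr n r c ic" using carr_ia[OF cc] r_def ic_def req by simp
  have Ib: "is_carr n rb b ib" using carr_ia[OF cb] rb_def ib_def by simp
  have Cr: "is_cobj n r" using cobj_ra[OF ca] r_def by simp
  have Cb: "is_cobj n rb" using cobj_ra[OF cb] rb_def by simp
  have Ja: "inj_on ia' {1..fst r}" using inj_ia r_def ia'_def by simp
  have Jc: "inj_on ic {1..fst r}" using inj_ia[of n c] r_def ic_def req by simp
  have H: "is_carr n r rb h" using carr_hh[OF ca cb cab] r_def rb_def h_def by simp
  have G: "is_carr n c a g" and Jg: "inj_on g {1..fst c}" using bwd.hyps by auto
  have comp: "g \<circ> ic = ia'"
    by (rule carr_uniq'[OF r_def ca carr_comp[OF Ic G] Ia])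
  have NFc: "NF n c b = [Bwd (r, c, ic), Fwd (r, rb, h), Fwd (rb, b, ib)]"
    unfolding NF_def req r_def rb_def ic_def ib_def h_def by simp
  have NFa: "NF n a b = [Bwd (r, a, ia'), Fwd (r, rb, h), Fwd (rb, b, ib)]"
    unfolding NF_def r_def rb_def ia'_def ib_def h_def by simp
  have s1: "zeq n a (Bwd (c, a, g) # p) (Bwd (c, a, g) # NF n c b) b"
    by (rule ctx'[OF conjunct1[OF bwd.IH], where u="[Bwd (c, a, g)]" and v="[]"])
      (simp_all add: bwd.hyps cb cc Ja[simplified] Jc[simplified] Jg[simplified] ca cb cc Cr Cb)
  have t1: "zeq n a [Bwd (c, a, g), Bwd (r, c, ic), Fwd (r, a, ia'), Bwd (r, a, ia')]
     [Bwd (c, a, g), Bwd (r, c, ic)] r"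
    by (rule ctx'[OF zeq.inv_l[OF Ia Ja], where u="[Bwd (c, a, g), Bwd (r, c, ic)]" and v="[]"])
      (simp_all add: G Jg Ic Jc Ja[simplified] Jc[simplified] Jg[simplified] ca cb cc Cr Cb)
  have e2: "zeq n r [Fwd (r, c, ic), Fwd (c, a, g)] [Fwd (r, a, ia')] a"
    using zeq.comp[OF Ic G] comp by simp
  have t2: "zeq n a [Bwd (c, a, g), Bwd (r, c, ic), Fwd (r, c, ic), Fwd (c, a, g), Bwd (r, a, ia')]
     [Bwd (c, a, g), Bwd (r, c, ic), Fwd (r, a, ia'), Bwd (r, a, ia')] r"
    by (rule ctx'[OF e2, where u="[Bwd (c, a, g), Bwd (r, c, ic)]" and v="[Bwd (r, a, ia')]"])
      (simp_all add: G Jg Ic Jc Ia Ja Ja[simplified] Jc[simplified] Jg[simplified] ca cb cc Cr Cb)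
  have t3: "zeq n a [Bwd (c, a, g), Bwd (r, c, ic), Fwd (r, c, ic), Fwd (c, a, g), Bwd (r, a, ia')]
     [Bwd (c, a, g), Fwd (c, a, g), Bwd (r, a, ia')] r"
    by (rule ctx'[OF zeq.inv_r[OF Ic Jc], where u="[Bwd (c, a, g)]" and v="[Fwd (c, a, g), Bwd (r, a, ia')]"])
      (simp_all add: G Jg Ia Ja Ja[simplified] Jc[simplified] Jg[simplified] ca cb cc Cr Cb)
  have t4: "zeq n a [Bwd (c, a, g), Fwd (c, a, g), Bwd (r, a, ia')] [Bwd (r, a, ia')] r"
    by (rule ctx'[OF zeq.inv_r[OF G Jg], where u="[]" and v="[Bwd (r, a, ia')]"])
      (simp_all add: Ia Ja ca Ja[simplified] Jc[simplified] Jg[simplified] ca cb cc Cr Cb)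
  have e5: "zeq n a [Bwd (c, a, g), Bwd (r, c, ic)] [Bwd (r, a, ia')] r"
    using zeq.trans[OF zeq.sym[OF t1] zeq.trans[OF zeq.sym[OF t2] zeq.trans[OF t3 t4]]] .
  have s2: "zeq n a (Bwd (c, a, g) # NF n c b) (NF n a b) b"
    unfolding NFc NFa
    by (rule ctx'[OF e5, where u="[]" and v="[Fwd (r, rb, h), Fwd (rb, b, ib)]"])
      (simp_all add: ca H Ib Ja[simplified] Jc[simplified] Jg[simplified] ca cb cc Cr Cb)
  have "zeq n a (Bwd (c, a, g) # p) (NF n a b) b" using zeq.trans[OF s1 s2] .
  then show ?case using cab by blast
qed

theorem mainTheorem9:
  fixes n :: nat
  shows "localization_thin n"
  unfolding localization_thin_def
proof (intro allI impI)
  fix a b p q assume p: "zz n a p b" and q: "zz n a q b"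
  show "zeq n a p q b"
    using zeq.trans[OF conjunct1[OF main[OF p]] zeq.sym[OF conjunct1[OF main[OF q]]]] .
qed

end
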